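(* For every sufficiently small $\varepsilon>0$ there exists $\gamma_0>0$ such that for every $\gamma\in(0,\gamma_0]$ there exists $n_0$ such that for all $n\ge n_0$: if $G$ is a graph on $n$ vertices with $\delta(G)\ge n/2$ that is $\gamma$-close to $2K_{n/2}$, then $G$ is an $\varepsilon$-superextremal two-clique with some partition $V(G)=A\uplus B$ satisfying (A1)–(A5), and moreover, either every vertex of $G$ has at least one neighbour in the other part (i.e. $G[A,B]$ has minimum degree at least $1$), or every vertex of one of the parts $A$, $B$ has at least $2$ neighbours in the other part.
   Context: A graph $G$ on $n$ vertices is $\gamma$-close to $2K_{n/2}$ if there exists $A\subseteq V(G)$ with $|A|=\lfloor n/2\rfloor$ such that the number of edges between $A$ and $V(G)\setminus A$ is at most $\gamma n^2$. For $X\subseteq V(G)$, $d(v,X)$ is the number of neighbours of $v$ in $X$. A graph $G$ on $n$ vertices is an $\varepsilon$-superextremal two-clique if there is a partition $V(G)=A\uplus B$ with: (A1) $||A|-|B||\le\varepsilon n$; (A2) $d(a,A)\ge(1/2-\varepsilon)n$ for all but at most $\varepsilon n$ vertices $a\in A$; (A3) $d(a,A)\ge(1/4-\varepsilon)n$ for all $a\in A$; (A4) $d(b,B)\ge(1/2-\varepsilon)n$ for all but at most $\varepsilon n$ vertices $b\in B$; (A5) $d(b,B)\ge(1/4-\varepsilon)n$ for all $b\in B$. *)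

theory Defs
  imports Complex_Main
begin

text \<open>A finite simple graph: a finite vertex set V (of naturals) with a symmetric,
irreflexive adjacency relation E; only adjacencies inside V are ever counted.\<close>
definition simple_graph :: "nat set \<Rightarrow> (nat \<Rightarrow> nat \<Rightarrow> bool) \<Rightarrow> bool" where
  "simple_graph V E \<longleftrightarrow> finite V \<and> (\<forall>x y. E x y \<longrightarrow> E y x) \<and> (\<forall>x. \<not> E x x)"

definition deg_in :: "(nat \<Rightarrow> nat \<Rightarrow> bool) \<Rightarrow> nat \<Rightarrow> nat set \<Rightarrow> nat" where
  "deg_in E v X = card {u \<in> X. E v u}"

definition min_degree_ge :: "nat set \<Rightarrow> (nat \<Rightarrow> nat \<Rightarrow> bool) \<Rightarrow> real \<Rightarrow> bool" where
  "min_degree_ge V E d \<longleftrightarrow> (\<forall>v\<in>V. real (deg_in E v V) \<ge> d)"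

definition edges_between :: "(nat \<Rightarrow> nat \<Rightarrow> bool) \<Rightarrow> nat set \<Rightarrow> nat set \<Rightarrow> nat" where
  "edges_between E X Y = card {(x, y). x \<in> X \<and> y \<in> Y \<and> E x y}"

definition close_to_two_cliques :: "nat set \<Rightarrow> (nat \<Rightarrow> nat \<Rightarrow> bool) \<Rightarrow> real \<Rightarrow> bool" where
  "close_to_two_cliques V E \<gamma> \<longleftrightarrow>
     (\<exists>A \<subseteq> V. card A = card V div 2 \<and>
        real (edges_between E A (V - A)) \<le> \<gamma> * (real (card V))\<^sup>2)"

definition superextremal_partition ::
  "nat set \<Rightarrow> (nat \<Rightarrow> nat \<Rightarrow> bool) \<Rightarrow> real \<Rightarrow> nat set \<Rightarrow> nat set \<Rightarrow> bool" where
  "superextremal_partition V E \<epsilon> A B \<longleftrightarrow>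
     (let n = real (card V) in
       A \<union> B = V \<and> A \<inter> B = {} \<and>
       \<bar>real (card A) - real (card B)\<bar> \<le> \<epsilon> * n \<and>
       real (card {a \<in> A. real (deg_in E a A) < (1/2 - \<epsilon>) * n}) \<le> \<epsilon> * n \<and>
       (\<forall>a\<in>A. real (deg_in E a A) \<ge> (1/4 - \<epsilon>) * n) \<and>
       real (card {b \<in> B. real (deg_in E b B) < (1/2 - \<epsilon>) * n}) \<le> \<epsilon> * n \<and>
       (\<forall>b\<in>B. real (deg_in E b B) \<ge> (1/4 - \<epsilon>) * n))"

end

theory Submission imports Defs begin

lemma deg_split:
  assumes "finite V" "A0 \<subseteq> V"
  shows "deg_in E v V = deg_in E v A0 + deg_in E v (V - A0)"
proof -
  have "{u\<in>V. E v u} = {u\<in>A0. E v u} \<union> {u\<in>V-A0. E v u}" using assms by auto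
  moreover have "finite A0" using assms finite_subset by blast
  hence "finite {u\<in>A0. E v u}" "finite {u\<in>V-A0. E v u}" using assms by auto
  ultimately show ?thesis unfolding deg_in_def by (simp add: card_Un_disjoint disjoint_iff)
qed

lemma deg_mono:
  assumes "A \<subseteq> B" "finite B" shows "deg_in E v A \<le> deg_in E v B"
  unfolding deg_in_def by (rule card_mono) (use assms in auto)

lemma deg_diff:
  assumes "finite A" "finite X"
  shows "deg_in E v A \<le> deg_in E v (A - X) + card X"
proof -
  have "{u\<in>A. E v u} \<subseteq> {u\<in>A-X. E v u} \<union> X" by auto
  hence "card {u\<in>A. E v u} \<le> card ({u\<in>A-X. E v u} \<union> X)"
    by (intro card_mono) (use assms in auto)
  also have "\<dots> \<le> card {u\<in>A-X. E v u} + card X" by (rule card_Un_le)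
  finally show ?thesis unfolding deg_in_def .
qed

lemma deg_self:
  assumes "finite X" "\<not> E v v"
  shows "deg_in E v X \<le> card X - 1 \<or> v \<notin> X"
proof (cases "v \<in> X")
  case True
  have "{u\<in>X. E v u} \<subseteq> X - {v}" using assms by auto
  hence "card {u\<in>X. E v u} \<le> card (X - {v})" by (intro card_mono) (use assms in auto)
  thus ?thesis using True assms unfolding deg_in_def by simp
qed simp

lemma edges_sum:
  assumes "finite A" "finite B"
  shows "edges_between E A B = (\<Sum>a\<in>A. deg_in E a B)"
proof -
  have "{(x, y). x \<in> A \<and> y \<in> B \<and> E x y} = Sigma A (\<lambda>x. {y\<in>B. E x y})" by auto
  thus ?thesis unfolding edges_between_def deg_in_def using assms by simp
qed

lemma edges_sym:
  assumes "\<And>x y. E x y \<Longrightarrow> E y x"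
  shows "edges_between E A B = edges_between E B A"
proof -
  have "{(x, y). x \<in> B \<and> y \<in> A \<and> E x y} = (\<lambda>(a,b). (b,a)) ` {(x, y). x \<in> A \<and> y \<in> B \<and> E x y}"
    using assms by auto
  moreover have "inj (\<lambda>(a::nat,b::nat). (b,a))" by (auto simp: inj_def)
  ultimately show ?thesis unfolding edges_between_def
    by (metis (no_types, lifting) card_image inj_on_subset subset_UNIV)
qed

lemma markov:
  fixes f :: "nat \<Rightarrow> nat"
  assumes "finite S" "t > 0"
  shows "real (card {v\<in>S. t < real (f v)}) * t \<le> real (\<Sum>v\<in>S. f v)"
proof -
  have "real (card {v\<in>S. t < real (f v)}) * t = (\<Sum>v\<in>{v\<in>S. t < real (f v)}. t)" by simp
  also have "\<dots> \<le> (\<Sum>v\<in>{v\<in>S. t < real (f v)}. real (f v))" by (intro sum_mono) auto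
  also have "\<dots> \<le> (\<Sum>v\<in>S. real (f v))" by (intro sum_mono2) (use assms in auto)
  finally show ?thesis by simp
qed


lemma extra_cond:
  assumes sg: "simple_graph V E" and md: "min_degree_ge V E (real (card V) / 2)"
    and part: "A \<union> B = V" "A \<inter> B = {}"
  shows "((\<forall>a\<in>A. deg_in E a B \<ge> 1) \<and> (\<forall>b\<in>B. deg_in E b A \<ge> 1))
             \<or> (\<forall>a\<in>A. deg_in E a B \<ge> 2)
             \<or> (\<forall>b\<in>B. deg_in E b A \<ge> 2)"
proof -
  have fV: "finite V" and irr: "\<And>x. \<not> E x x" using sg unfolding simple_graph_def by auto
  have fA: "finite A" and fB: "finite B" using fV part by auto
  have BV: "B = V - A" "A = V - B" using part by auto
  have cV: "real (card V) = real (card A) + real (card B)" using part fA fB card_Un_disjoint by (metis of_nat_add)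
  have low: "real (card V)/2 - real (card X) + 1 \<le> real (deg_in E a Y)"
    if "a \<in> X" "X \<union> Y = V" "Y = V - X" for a X Y
  proof -
    have fX: "finite X" using that(2) fV by (metis finite_Un)
    have "deg_in E a V = deg_in E a X + deg_in E a Y" using deg_split[of V X E a] fV that by auto
    hence 1: "real (deg_in E a V) = real (deg_in E a X) + real (deg_in E a Y)" by simp
    have "card X \<ge> 1" using that fX by (metis One_nat_def Suc_leI card_gt_0_iff empty_iff)
    moreover have "deg_in E a X \<le> card X - 1" using deg_self[of X E a] fX irr[of a] that by auto
    ultimately have 2: "real (deg_in E a X) \<le> real (card X) - 1" by (simp add: of_nat_diff)
    have 3: "real (deg_in E a V) \<ge> real (card V)/2" using md that unfolding min_degree_ge_def by auto
    from 1 2 3 show ?thesis by linarith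
  qed
  have lowA: "real (card V)/2 - real (card A) + 1 \<le> real (deg_in E a B)" if "a \<in> A" for a
    using low[of a A B, OF that part(1) BV(1)] .
  have lowB: "real (card V)/2 - real (card B) + 1 \<le> real (deg_in E b A)" if "b \<in> B" for b
    using low[of b B A, OF that _ BV(2)] part(1) by (simp add: Un_commute)
  consider "card A = card B" | "card A < card B" | "card B < card A" by linarith
  then show ?thesis
  proof cases
    case 1
    hence "real (card V)/2 - real (card A) + 1 = 1" "real (card V)/2 - real (card B) + 1 = 1" using cV by auto
    hence "\<forall>a\<in>A. real (deg_in E a B) \<ge> 1" "\<forall>b\<in>B. real (deg_in E b A) \<ge> 1" using lowA lowB by auto
    thus ?thesis by simp
  next
    case 2
    hence "real (card A) + 1 \<le> real (card B)" by simp
    hence "real (card V)/2 - real (card A) + 1 > 1" using cV by auto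
    hence "\<forall>a\<in>A. real (deg_in E a B) > 1" using lowA by fastforce
    hence "\<forall>a\<in>A. deg_in E a B \<ge> 2" by (auto simp add: Suc_le_eq numeral_2_eq_2)
    thus ?thesis by blast
  next
    case 3
    hence "real (card B) + 1 \<le> real (card A)" by simp
    hence "real (card V)/2 - real (card B) + 1 > 1" using cV by auto
    hence "\<forall>b\<in>B. real (deg_in E b A) > 1" using lowB by fastforce
    hence "\<forall>b\<in>B. deg_in E b A \<ge> 2" by (auto simp add: Suc_le_eq numeral_2_eq_2)
    thus ?thesis by blast
  qed
qed


lemma key:
  fixes \<epsilon> \<gamma> :: real
  assumes eps: "0 < \<epsilon>" and gam: "0 < \<gamma>" "\<gamma> \<le> \<epsilon>^2/16"
    and sg: "simple_graph V E" and nV: "card V = n" and nbig: "2/\<epsilon> \<le> real n"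
    and md: "min_degree_ge V E (real n / 2)"
    and A0: "A0 \<subseteq> V" "card A0 = n div 2" "real (edges_between E A0 (V - A0)) \<le> \<gamma> * (real n)^2"
  shows "\<exists>A B. superextremal_partition V E \<epsilon> A B"
proof -
  have fV: "finite V" and irr: "\<And>x. \<not> E x x" and sym: "\<And>x y. E x y \<Longrightarrow> E y x"
    using sg unfolding simple_graph_def by auto
  define B0 where "B0 = V - A0"
  have fA0: "finite A0" and fB0: "finite B0" using fV A0 finite_subset B0_def by auto
  have "2/\<epsilon> > 0" using eps by simp
  hence npos: "real n > 0" using nbig by linarith
  have enpos: "\<epsilon> * real n > 0" using eps npos by simp
  have en2: "\<epsilon> * real n \<ge> 2" using nbig eps by (simp add: field_simps)
  define e where "e = edges_between E A0 B0"
  define t where "t = \<epsilon> * real n / 2"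
  have tpos: "t > 0" unfolding t_def using eps npos by simp
  define X1 where "X1 = {v\<in>A0. t < real (deg_in E v B0)}"
  define X2 where "X2 = {v\<in>B0. t < real (deg_in E v A0)}"
  define X where "X = X1 \<union> X2"
  have fX: "finite X" using fA0 fB0 X_def X1_def X2_def by auto
  have c1: "real (card X1) * t \<le> real e"
    using markov[OF fA0 tpos, of "\<lambda>v. deg_in E v B0"] edges_sum[OF fA0 fB0, of E] X1_def e_def by simp
  have c2: "real (card X2) * t \<le> real e"
    using markov[OF fB0 tpos, of "\<lambda>v. deg_in E v A0"] edges_sum[OF fB0 fA0, of E] edges_sym[of E B0 A0] sym
      X2_def e_def by simp
  have "card X \<le> card X1 + card X2" unfolding X_def by (rule card_Un_le)
  hence "real (card X) \<le> real (card X1) + real (card X2)" by linarith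
  hence "real (card X) * t \<le> (real (card X1) + real (card X2)) * t"
    using tpos by (intro mult_right_mono) auto
  hence "real (card X) * t \<le> 2 * real e" using c1 c2 by (simp add: distrib_right)
  also have "\<dots> \<le> 2 * (\<gamma> * (real n)^2)" using A0(3) e_def B0_def by simp
  also have "\<dots> \<le> 2 * (\<epsilon>^2/16 * (real n)^2)" using mult_right_mono[OF gam(2), of "(real n)^2"] by simp
  also have "\<dots> = (\<epsilon> * real n / 4) * t" unfolding t_def by (simp add: power2_eq_square)
  finally have cX: "real (card X) \<le> \<epsilon> * real n / 4" using tpos by simp
  define XA where "XA = {x\<in>X. deg_in E x B0 \<le> deg_in E x A0}"
  define A where "A = (A0 - X) \<union> XA"
  define B where "B = V - A"
  have AV: "A \<subseteq> V" using A_def XA_def X_def X1_def X2_def A0 B0_def by auto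
  have fA: "finite A" "finite B" using AV fV B_def finite_subset by auto
  have A0XA: "A0 - X \<subseteq> A" using A_def by auto
  have B0XB: "B0 - X \<subseteq> B" using A_def B_def B0_def XA_def by auto
  have degV: "real (deg_in E v A0) + real (deg_in E v B0) \<ge> real n / 2" if "v \<in> V" for v
  proof -
    have "deg_in E v V = deg_in E v A0 + deg_in E v B0" using deg_split[OF fV A0(1), of E v] B0_def by simp
    moreover have "real (deg_in E v V) \<ge> real n / 2" using md that unfolding min_degree_ge_def by simp
    ultimately show ?thesis by simp
  qed
  have dA: "real (deg_in E a A) \<ge> real (deg_in E a A0) - real (card X)" for a
  proof -
    have "deg_in E a A0 \<le> deg_in E a (A0 - X) + card X" by (rule deg_diff[OF fA0 fX])
    moreover have "deg_in E a (A0 - X) \<le> deg_in E a A" by (rule deg_mono[OF A0XA fA(1)])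
    ultimately show ?thesis by linarith
  qed
  have dB: "real (deg_in E b B) \<ge> real (deg_in E b B0) - real (card X)" for b
  proof -
    have "deg_in E b B0 \<le> deg_in E b (B0 - X) + card X" by (rule deg_diff[OF fB0 fX])
    moreover have "deg_in E b (B0 - X) \<le> deg_in E b B" by (rule deg_mono[OF B0XB fA(2)])
    ultimately show ?thesis by linarith
  qed
  have goodA: "real (deg_in E a A) \<ge> (1/2 - \<epsilon>) * real n" if "a \<in> A" "a \<notin> X" for a
  proof -
    have "a \<in> A0" "a \<notin> X1" using that A_def XA_def X_def by auto
    hence "real (deg_in E a B0) \<le> t" using X1_def by auto
    moreover have "a \<in> V" using \<open>a \<in> A0\<close> A0 by auto
    ultimately have "real (deg_in E a A0) \<ge> real n / 2 - t" using degV[of a] by linarith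
    thus ?thesis using dA[of a] cX t_def eps npos by (simp add: algebra_simps)
  qed
  have okA: "real (deg_in E a A) \<ge> (1/4 - \<epsilon>) * real n" if "a \<in> A" for a
  proof (cases "a \<in> X")
    case True
    hence "a \<in> XA" using that A_def by auto
    hence "deg_in E a B0 \<le> deg_in E a A0" "a \<in> V" using XA_def X_def X1_def X2_def A0 B0_def by auto
    hence "real (deg_in E a A0) \<ge> real n / 4" using degV[of a] by linarith
    thus ?thesis using dA[of a] cX eps npos by (simp add: algebra_simps)
  next
    case False
    have "(1/4-\<epsilon>)*real n \<le> (1/2-\<epsilon>)*real n" using npos by (intro mult_right_mono) auto
    thus ?thesis using goodA[OF that False] by linarith
  qed
  have goodB: "real (deg_in E b B) \<ge> (1/2 - \<epsilon>) * real n" if "b \<in> B" "b \<notin> X" for b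
  proof -
    have "b \<in> B0" "b \<notin> X2" using that A_def B_def B0_def X_def by auto
    hence "real (deg_in E b A0) \<le> t" using X2_def by auto
    moreover have "b \<in> V" using \<open>b \<in> B0\<close> B0_def by auto
    ultimately have "real (deg_in E b B0) \<ge> real n / 2 - t" using degV[of b] by linarith
    thus ?thesis using dB[of b] cX t_def eps npos by (simp add: algebra_simps)
  qed
  have okB: "real (deg_in E b B) \<ge> (1/4 - \<epsilon>) * real n" if "b \<in> B" for b
  proof (cases "b \<in> X")
    case True
    hence "b \<notin> XA" using that A_def B_def by auto
    hence "deg_in E b A0 < deg_in E b B0" "b \<in> V" using True XA_def X_def X1_def X2_def A0 B0_def by auto
    hence "real (deg_in E b B0) \<ge> real n / 4" using degV[of b] by linarith
    thus ?thesis using dB[of b] cX eps npos by (simp add: algebra_simps)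
  next
    case False
    have "(1/4-\<epsilon>)*real n \<le> (1/2-\<epsilon>)*real n" using npos by (intro mult_right_mono) auto
    thus ?thesis using goodB[OF that False] by linarith
  qed
  have badA: "real (card {a \<in> A. real (deg_in E a A) < (1/2 - \<epsilon>) * real n}) \<le> \<epsilon> * real n"
  proof -
    have "{a \<in> A. real (deg_in E a A) < (1/2 - \<epsilon>) * real n} \<subseteq> X"
    proof
      fix x assume "x \<in> {a \<in> A. real (deg_in E a A) < (1/2 - \<epsilon>) * real n}"
      hence "x \<in> A" "real (deg_in E x A) < (1/2 - \<epsilon>) * real n" by auto
      thus "x \<in> X" using goodA[of x] by (cases "x \<in> X") auto
    qed
    hence "card {a \<in> A. real (deg_in E a A) < (1/2 - \<epsilon>) * real n} \<le> card X" using fX card_mono by blast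
    hence "real (card {a \<in> A. real (deg_in E a A) < (1/2 - \<epsilon>) * real n}) \<le> real (card X)" by (simp only: of_nat_le_iff)
    thus ?thesis using cX enpos by linarith
  qed
  have badB: "real (card {b \<in> B. real (deg_in E b B) < (1/2 - \<epsilon>) * real n}) \<le> \<epsilon> * real n"
  proof -
    have "{b \<in> B. real (deg_in E b B) < (1/2 - \<epsilon>) * real n} \<subseteq> X"
    proof
      fix x assume "x \<in> {b \<in> B. real (deg_in E b B) < (1/2 - \<epsilon>) * real n}"
      hence "x \<in> B" "real (deg_in E x B) < (1/2 - \<epsilon>) * real n" by auto
      thus "x \<in> X" using goodB[of x] by (cases "x \<in> X") auto
    qed
    hence "card {b \<in> B. real (deg_in E b B) < (1/2 - \<epsilon>) * real n} \<le> card X" using fX card_mono by blast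
    hence "real (card {b \<in> B. real (deg_in E b B) < (1/2 - \<epsilon>) * real n}) \<le> real (card X)" by (simp only: of_nat_le_iff)
    thus ?thesis using cX enpos by linarith
  qed
  have "A \<subseteq> A0 \<union> X" using A_def XA_def by auto
  hence "card A \<le> card (A0 \<union> X)" using fA0 fX by (intro card_mono) auto
  also have "\<dots> \<le> card A0 + card X" by (rule card_Un_le)
  finally have sA1: "real (card A) \<le> real (card A0) + real (card X)" by linarith
  have "card A0 \<le> card (A0 - X) + card X" using fA0 fX
  proof -
    have "card A0 \<le> card ((A0 - X) \<union> X)" using fA0 fX by (intro card_mono) auto
    also have "\<dots> \<le> card (A0 - X) + card X" by (rule card_Un_le)
    finally show ?thesis .
  qed
  also have "card (A0 - X) \<le> card A" using A0XA fA by (intro card_mono) auto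
  hence "card (A0 - X) + card X \<le> card A + card X" by simp
  finally have sA2: "real (card A0) \<le> real (card A) + real (card X)" by linarith
  have "card B = card V - card A" unfolding B_def by (rule card_Diff_subset[OF fA(1) AV])
  moreover have "card A \<le> card V" using fV AV by (rule card_mono)
  ultimately have cB: "real (card B) = real n - real (card A)" using nV by (simp add: of_nat_diff)
  have cA0: "2 * real (card A0) \<le> real n" "real n \<le> 2 * real (card A0) + 1" using A0(2) by linarith+
  have A1: "\<bar>real (card A) - real (card B)\<bar> \<le> \<epsilon> * real n" using sA1 sA2 cB cA0 cX en2 by linarith
  have "superextremal_partition V E \<epsilon> A B"
  proof -
    have "A \<union> B = V" "A \<inter> B = {}" using AV B_def by auto
    moreover have "\<forall>a\<in>A. real (deg_in E a A) \<ge> (1/4 - \<epsilon>) * real n" using okA by blast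
    moreover have "\<forall>b\<in>B. real (deg_in E b B) \<ge> (1/4 - \<epsilon>) * real n" using okB by blast
    ultimately show ?thesis using A1 badA badB unfolding superextremal_partition_def Let_def nV by blast
  qed
  thus ?thesis by blast
qed


theorem mainTheorem7:
  shows "\<exists>\<epsilon>0>0. \<forall>\<epsilon>. 0 < \<epsilon> \<and> \<epsilon> < \<epsilon>0 \<longrightarrow>
    (\<exists>\<gamma>0>0. \<forall>\<gamma>. 0 < \<gamma> \<and> \<gamma> \<le> \<gamma>0 \<longrightarrow>
      (\<exists>n0::nat. \<forall>n\<ge>n0. \<forall>(V::nat set) E.
         simple_graph V E \<and> card V = n \<and> min_degree_ge V E (real n / 2) \<and>
         close_to_two_cliques V E \<gamma> \<longrightarrow>
         (\<exists>A B. superextremal_partition V E \<epsilon> A B \<and>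
            ((\<forall>a\<in>A. deg_in E a B \<ge> 1) \<and> (\<forall>b\<in>B. deg_in E b A \<ge> 1)
             \<or> (\<forall>a\<in>A. deg_in E a B \<ge> 2)
             \<or> (\<forall>b\<in>B. deg_in E b A \<ge> 2)))))"
proof (rule exI[of _ "1::real"], intro conjI allI impI)
  show "(0::real) < 1" by simp
next
  fix \<epsilon> :: real assume "0 < \<epsilon> \<and> \<epsilon> < 1"
  hence eps: "0 < \<epsilon>" by simp
  show "\<exists>\<gamma>0>0. \<forall>\<gamma>. 0 < \<gamma> \<and> \<gamma> \<le> \<gamma>0 \<longrightarrow>
      (\<exists>n0::nat. \<forall>n\<ge>n0. \<forall>(V::nat set) E.
         simple_graph V E \<and> card V = n \<and> min_degree_ge V E (real n / 2) \<and>
         close_to_two_cliques V E \<gamma> \<longrightarrow>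
         (\<exists>A B. superextremal_partition V E \<epsilon> A B \<and>
            ((\<forall>a\<in>A. deg_in E a B \<ge> 1) \<and> (\<forall>b\<in>B. deg_in E b A \<ge> 1)
             \<or> (\<forall>a\<in>A. deg_in E a B \<ge> 2)
             \<or> (\<forall>b\<in>B. deg_in E b A \<ge> 2))))"
  proof (rule exI[of _ "\<epsilon>^2/16"], intro conjI allI impI)
    show "0 < \<epsilon>^2/16" using eps by simp
  next
    fix \<gamma> :: real assume g: "0 < \<gamma> \<and> \<gamma> \<le> \<epsilon>^2/16"
    show "\<exists>n0::nat. \<forall>n\<ge>n0. \<forall>(V::nat set) E.
         simple_graph V E \<and> card V = n \<and> min_degree_ge V E (real n / 2) \<and>
         close_to_two_cliques V E \<gamma> \<longrightarrow>
         (\<exists>A B. superextremal_partition V E \<epsilon> A B \<and>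
            ((\<forall>a\<in>A. deg_in E a B \<ge> 1) \<and> (\<forall>b\<in>B. deg_in E b A \<ge> 1)
             \<or> (\<forall>a\<in>A. deg_in E a B \<ge> 2)
             \<or> (\<forall>b\<in>B. deg_in E b A \<ge> 2)))"
    proof (rule exI[of _ "nat \<lceil>2/\<epsilon>\<rceil>"], intro allI impI)
      fix n :: nat and V :: "nat set" and E
      assume n: "nat \<lceil>2/\<epsilon>\<rceil> \<le> n"
      assume H: "simple_graph V E \<and> card V = n \<and> min_degree_ge V E (real n / 2) \<and>
         close_to_two_cliques V E \<gamma>"
      have nbig: "2/\<epsilon> \<le> real n"
      proof -
        have "2/\<epsilon> \<le> real (nat \<lceil>2/\<epsilon>\<rceil>)" by linarith
        also have "\<dots> \<le> real n" using n by simp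
        finally show ?thesis .
      qed
      obtain A0 where A0: "A0 \<subseteq> V" "card A0 = card V div 2"
        "real (edges_between E A0 (V - A0)) \<le> \<gamma> * (real (card V))\<^sup>2"
        using H unfolding close_to_two_cliques_def by blast
      have cV: "card V = n" using H by simp
      have sg: "simple_graph V E" and md: "min_degree_ge V E (real n / 2)" using H by auto
      have g1: "0 < \<gamma>" and g2: "\<gamma> \<le> \<epsilon>^2/16" using g by auto
      have A02: "card A0 = n div 2" using A0(2) cV by simp
      have A03: "real (edges_between E A0 (V - A0)) \<le> \<gamma> * (real n)\<^sup>2" using A0(3) cV by simp
      obtain A B where P: "superextremal_partition V E \<epsilon> A B"
        using key[OF eps g1 g2 sg cV nbig md A0(1) A02 A03] by blast
      have "A \<union> B = V" "A \<inter> B = {}" using P unfolding superextremal_partition_def Let_def by auto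
      moreover have "min_degree_ge V E (real (card V) / 2)" using H by simp
      ultimately have "((\<forall>a\<in>A. deg_in E a B \<ge> 1) \<and> (\<forall>b\<in>B. deg_in E b A \<ge> 1))
             \<or> (\<forall>a\<in>A. deg_in E a B \<ge> 2)
             \<or> (\<forall>b\<in>B. deg_in E b A \<ge> 2)" using extra_cond H by blast
      thus "\<exists>A B. superextremal_partition V E \<epsilon> A B \<and>
            ((\<forall>a\<in>A. deg_in E a B \<ge> 1) \<and> (\<forall>b\<in>B. deg_in E b A \<ge> 1)
             \<or> (\<forall>a\<in>A. deg_in E a B \<ge> 2)
             \<or> (\<forall>b\<in>B. deg_in E b A \<ge> 2))" using P by blast
    qed
  qed
qed

end
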